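(* Let $G=(V,E)$ be a finite simple graph and let $L$ and $|H|$ be its connection matrix and its sign-less Hodge Laplacian (defined in the context). Then $L$ is invertible, its inverse $L^{-1}$ has integer entries, and $$|H| = L - L^{-1}.$$
   Context: Let $G=(V,E)$ be a finite simple graph. Its associated $1$-dimensional simplicial complex is the set of simplices $X=\{\{v\}: v\in V\}\cup E$, where each edge is regarded as a $2$-element subset of $V$; put $N=|V|+|E|$. Fix an ordering of $X$, so that real-valued functions on $X$ are vectors in $\mathbb{R}^N$ and operators on them are $N\times N$ matrices indexed by $X$. The connection matrix (connection Laplacian) $L$ is the $N\times N$ matrix with $L(x,y)=1$ if $x\cap y\neq\emptyset$ and $L(x,y)=0$ if $x\cap y=\emptyset$. The sign-less exterior derivative $|d|$ is the $N\times N$ matrix with $|d|(x,y)=1$ if $y\subset x$ and $|x|=|y|+1$, and $|d|(x,y)=0$ otherwise. The sign-less Hodge Laplacian is $|H|=(|d|+|d|^T)^2$. *)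

theory Defs
  imports Complex_Main
begin

definition simple_graph :: "'a set \<Rightarrow> 'a set set \<Rightarrow> bool" where
  "simple_graph V E \<longleftrightarrow> finite V \<and>
     (\<forall>e\<in>E. \<exists>u v. u \<in> V \<and> v \<in> V \<and> u \<noteq> v \<and> e = {u, v})"

definition simplices :: "'a set \<Rightarrow> 'a set set \<Rightarrow> 'a set set" where
  "simplices V E = {{v} | v. v \<in> V} \<union> E"

definition mat_mult :: "'b set \<Rightarrow> ('b \<Rightarrow> 'b \<Rightarrow> real) \<Rightarrow> ('b \<Rightarrow> 'b \<Rightarrow> real) \<Rightarrow> ('b \<Rightarrow> 'b \<Rightarrow> real)" where
  "mat_mult X A B = (\<lambda>x y. \<Sum>z\<in>X. A x z * B z y)"

definition mat_id :: "'b \<Rightarrow> 'b \<Rightarrow> real" where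
  "mat_id = (\<lambda>x y. if x = y then 1 else 0)"

definition mat_transpose :: "('b \<Rightarrow> 'b \<Rightarrow> real) \<Rightarrow> ('b \<Rightarrow> 'b \<Rightarrow> real)" where
  "mat_transpose A = (\<lambda>x y. A y x)"

definition is_inverse_on :: "'b set \<Rightarrow> ('b \<Rightarrow> 'b \<Rightarrow> real) \<Rightarrow> ('b \<Rightarrow> 'b \<Rightarrow> real) \<Rightarrow> bool" where
  "is_inverse_on X A M \<longleftrightarrow>
     (\<forall>x\<in>X. \<forall>y\<in>X. mat_mult X A M x y = mat_id x y \<and> mat_mult X M A x y = mat_id x y)"

definition connection_matrix :: "'a set \<Rightarrow> 'a set \<Rightarrow> real" where
  "connection_matrix = (\<lambda>x y. if x \<inter> y \<noteq> {} then 1 else 0)"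

definition signless_d :: "'a set \<Rightarrow> 'a set \<Rightarrow> real" where
  "signless_d = (\<lambda>x y. if y \<subset> x \<and> card x = card y + 1 then 1 else 0)"

definition signless_hodge :: "'a set set \<Rightarrow> 'a set \<Rightarrow> 'a set \<Rightarrow> real" where
  "signless_hodge X =
     (let D = (\<lambda>x y. signless_d x y + mat_transpose signless_d x y) in mat_mult X D D)"

end

theory Submission imports Defs begin

lemma edgeE: assumes "simple_graph V E" "e \<in> E"
  obtains u v where "u \<in> V" "v \<in> V" "u \<noteq> v" "e = {u,v}"
  using assms unfolding simple_graph_def by blast

lemma edge_card: "simple_graph V E \<Longrightarrow> e \<in> E \<Longrightarrow> card e = 2"
  by (erule edgeE, assumption) auto

lemma edge_sub: "simple_graph V E \<Longrightarrow> e \<in> E \<Longrightarrow> e \<subseteq> V"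
  by (erule edgeE, assumption) auto

lemma finE: "simple_graph V E \<Longrightarrow> finite E"
proof -
  assume s: "simple_graph V E"
  hence "E \<subseteq> Pow V" using edge_sub by blast
  moreover have "finite V" using s simple_graph_def by blast
  ultimately show ?thesis by (meson finite_Pow_iff rev_finite_subset)
qed

lemma sumX: assumes s: "simple_graph V E"
  shows "(\<Sum>z\<in>simplices V E. g z) = (\<Sum>c\<in>V. g {c}) + (\<Sum>e\<in>E. g e)"
proof -
  have fV: "finite V" using s simple_graph_def by blast
  have d: "((\<lambda>v. {v}) ` V) \<inter> E = {}" using edge_card[OF s] by fastforce
  have "simplices V E = ((\<lambda>v. {v}) ` V) \<union> E" unfolding simplices_def by blast
  hence "(\<Sum>z\<in>simplices V E. g z) = (\<Sum>z\<in>(\<lambda>v. {v}) ` V. g z) + (\<Sum>e\<in>E. g e)"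
    using sum.union_disjoint[OF _ finE[OF s] d] fV by simp
  also have "(\<Sum>z\<in>(\<lambda>v. {v}) ` V. g z) = (\<Sum>c\<in>V. g {c})"
    by (subst sum.reindex) (auto simp: inj_on_def)
  finally show ?thesis .
qed

definition Dm :: "'a set \<Rightarrow> 'a set \<Rightarrow> real" where
  "Dm x y = signless_d x y + signless_d y x"

lemma hodge_Dm: "signless_hodge X x y = (\<Sum>z\<in>X. Dm x z * Dm z y)"
  unfolding signless_hodge_def Dm_def mat_mult_def mat_transpose_def Let_def by simp

lemma D_vv: "Dm {a} {b} = 0"
  unfolding Dm_def signless_d_def by auto

lemma D_ve: "simple_graph V E \<Longrightarrow> e \<in> E \<Longrightarrow> Dm {a} e = (if a \<in> e then 1 else 0)"
  by (erule edgeE, assumption) (auto simp: Dm_def signless_d_def)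

lemma D_ev: "simple_graph V E \<Longrightarrow> e \<in> E \<Longrightarrow> Dm e {a} = (if a \<in> e then 1 else 0)"
  by (erule edgeE, assumption) (auto simp: Dm_def signless_d_def)

lemma D_ee: "simple_graph V E \<Longrightarrow> e \<in> E \<Longrightarrow> f \<in> E \<Longrightarrow> Dm e f = 0"
  using edge_card[of V E e] edge_card[of V E f] by (auto simp: Dm_def signless_d_def)

lemma ind_sum: "finite V \<Longrightarrow> A \<subseteq> V \<Longrightarrow> (\<Sum>c\<in>V. if c \<in> A then 1 else 0) = real (card A)"
  by (simp add: sum.If_cases Int_absorb1 inf.absorb2)

lemma H_vv: assumes s: "simple_graph V E"
  shows "signless_hodge (simplices V E) {a} {b} = (\<Sum>e\<in>E. if a \<in> e \<and> b \<in> e then 1 else 0)"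
  unfolding hodge_Dm sumX[OF s] using D_ve[OF s] D_ev[OF s]
  by (simp add: D_vv) (rule sum.cong, auto)

lemma H_ve: assumes s: "simple_graph V E" and f: "f \<in> E"
  shows "signless_hodge (simplices V E) {a} f = 0"
  unfolding hodge_Dm sumX[OF s] using D_ee[OF s _ f]
  by (simp add: D_vv)

lemma H_ev: assumes s: "simple_graph V E" and f: "f \<in> E"
  shows "signless_hodge (simplices V E) f {a} = 0"
  unfolding hodge_Dm sumX[OF s] using D_ee[OF s f]
  by (simp add: D_vv)

lemma H_ee: assumes s: "simple_graph V E" and e: "e \<in> E" and f: "f \<in> E"
  shows "signless_hodge (simplices V E) e f = real (card (e \<inter> f))"
proof -
  have fV: "finite V" using s simple_graph_def by blast
  have "signless_hodge (simplices V E) e f = (\<Sum>c\<in>V. if c \<in> e \<inter> f then 1 else 0)"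
    unfolding hodge_Dm sumX[OF s] using D_ee[OF s e] D_ve[OF s f] D_ev[OF s e]
    by (simp add: if_distrib) (rule sum.cong, auto)
  also have "\<dots> = real (card (e \<inter> f))" using ind_sum[OF fV] edge_sub[OF s e] by blast
  finally show ?thesis .
qed

lemma keyK: assumes s: "simple_graph V E" and e: "e \<in> E" and f: "f \<in> E"
  shows "real (card (e \<inter> f)) - (if e \<inter> f \<noteq> {} then 1 else 0) = (if e = f then 1 else 0)"
proof -
  obtain u v where "e = {u,v}" "u \<noteq> v" using edgeE[OF s e] by metis
  moreover obtain p q where "f = {p,q}" "p \<noteq> q" using edgeE[OF s f] by metis
  ultimately show ?thesis by (cases "u = p"; cases "u = q"; cases "v = p"; cases "v = q") (auto simp: insert_commute card_insert_if)
qed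

lemma L_vv: "connection_matrix {a} {b} = (if a = b then 1 else 0)"
  by (auto simp: connection_matrix_def)
lemma L_ve: "connection_matrix {a} e = (if a \<in> e then 1 else 0)"
  by (auto simp: connection_matrix_def)
lemma L_ev: "connection_matrix e {a} = (if a \<in> e then 1 else 0)"
  by (auto simp: connection_matrix_def)

lemma M_ee: assumes s: "simple_graph V E" and e: "e \<in> E" and f: "f \<in> E"
  shows "connection_matrix e f - signless_hodge (simplices V E) e f = - (if e = f then 1 else 0)"
  using keyK[OF s e f] unfolding H_ee[OF s e f] connection_matrix_def by linarith

lemma ind_mult: "(if P then 1 else 0) * (t::real) = (if P then t else 0)" by simp

lemma prod_id: assumes s: "simple_graph V E" and x: "x \<in> simplices V E" and y: "y \<in> simplices V E"
  shows "(\<Sum>z\<in>simplices V E. connection_matrix x z *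
          (connection_matrix z y - signless_hodge (simplices V E) z y)) = mat_id x y"
proof -
  let ?X = "simplices V E"
  let ?M = "\<lambda>z y. connection_matrix z y - signless_hodge ?X z y"
  have fV: "finite V" using s simple_graph_def by blast
  have fE: "finite E" using finE[OF s] .
  have ne: "\<And>a e. e \<in> E \<Longrightarrow> {a} \<noteq> e" using edge_card[OF s] by fastforce
  from x consider (xv) a where "a \<in> V" "x = {a}" | (xe) "x \<in> E" unfolding simplices_def by blast
  then show ?thesis
  proof cases
    case xv
    have vp: "(\<Sum>c\<in>V. connection_matrix {a} {c} * ?M {c} y) = ?M {a} y"
      by (simp add: L_vv ind_mult sum.delta fV xv)
    have ep: "(\<Sum>e\<in>E. connection_matrix {a} e * ?M e y) = (\<Sum>e\<in>E. if a \<in> e then ?M e y else 0)"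
      by (simp add: L_ve ind_mult)
    from y consider (yv) b where "b \<in> V" "y = {b}" | (ye) "y \<in> E" unfolding simplices_def by blast
    then show ?thesis
    proof cases
      case yv
      have "(\<Sum>e\<in>E. if a \<in> e then ?M e y else 0) = (\<Sum>e\<in>E. if a \<in> e \<and> b \<in> e then 1 else 0)"
        by (rule sum.cong) (auto simp: yv L_ev H_ev[OF s])
      then show ?thesis unfolding sumX[OF s] xv(2) vp ep
        by (simp add: yv L_vv H_vv[OF s] mat_id_def)
    next
      case ye
      have "(\<Sum>e\<in>E. if a \<in> e then ?M e y else 0) = (\<Sum>e\<in>E. if e = y then - (if a \<in> e then 1 else 0) else 0)"
        by (rule sum.cong) (auto simp: M_ee[OF s _ ye])
      also have "\<dots> = - (if a \<in> y then 1 else 0)" by (simp add: sum.delta' fE ye)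
      finally show ?thesis unfolding sumX[OF s] xv(2) vp ep
        using ne[OF ye, of a] by (simp add: L_ve H_ve[OF s ye] mat_id_def)
    qed
  next
    case xe
    have vp: "(\<Sum>c\<in>V. connection_matrix x {c} * ?M {c} y) = (\<Sum>c\<in>V. if c \<in> x then ?M {c} y else 0)"
      by (simp add: L_ev ind_mult)
    have eV: "x \<subseteq> V" using edge_sub[OF s xe] .
    from y consider (yv) b where "b \<in> V" "y = {b}" | (ye) "y \<in> E" unfolding simplices_def by blast
    then show ?thesis
    proof cases
      case yv
      have "(\<Sum>c\<in>V. if c \<in> x then ?M {c} y else 0) =
            (\<Sum>c\<in>V. if c = b then (if c \<in> x then 1 else 0) else 0) -
            (\<Sum>c\<in>V. \<Sum>f\<in>E. if b \<in> f then (if c \<in> x \<inter> f then 1 else 0) else 0)"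
        unfolding sum_subtractf[symmetric]
        by (rule sum.cong) (auto simp: yv L_vv H_vv[OF s] intro!: sum.cong sum.neutral)
      also have "(\<Sum>c\<in>V. \<Sum>f\<in>E. if b \<in> f then (if c \<in> x \<inter> f then 1 else 0) else 0)
          = (\<Sum>f\<in>E. \<Sum>c\<in>V. if b \<in> f then (if c \<in> x \<inter> f then 1 else 0) else 0)"
        by (rule sum.swap)
      also have "\<dots> = (\<Sum>f\<in>E. if b \<in> f then real (card (x \<inter> f)) else 0)"
      proof (rule sum.cong)
        fix f assume "f \<in> E"
        show "(\<Sum>c\<in>V. if b \<in> f then (if c \<in> x \<inter> f then 1 else 0) else 0) =
              (if b \<in> f then real (card (x \<inter> f)) else 0)"
          using eV ind_sum[OF fV, of "x \<inter> f"] by (cases "b \<in> f") auto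
      qed simp
      also have "(\<Sum>c\<in>V. if c = b then (if c \<in> x then 1 else 0) else 0) = (if b \<in> x then 1 else 0)"
        by (simp add: sum.delta' fV yv)
      finally have A: "(\<Sum>c\<in>V. if c \<in> x then ?M {c} y else 0) =
          (if b \<in> x then 1 else 0) - (\<Sum>f\<in>E. if b \<in> f then real (card (x \<inter> f)) else 0)" .
      have B: "(\<Sum>f\<in>E. connection_matrix x f * ?M f y) = (\<Sum>f\<in>E. if b \<in> f then (if x \<inter> f \<noteq> {} then 1 else 0) else 0)"
        by (rule sum.cong) (auto simp: yv L_ev H_ev[OF s] connection_matrix_def)
      have "(if b \<in> x then 1 else 0) - (\<Sum>f\<in>E. if b \<in> f then real (card (x \<inter> f)) else 0)
           + (\<Sum>f\<in>E. if b \<in> f then (if x \<inter> f \<noteq> {} then 1 else 0) else 0)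
         = (if b \<in> x then 1 else 0) - (\<Sum>f\<in>E. if b \<in> f then real (card (x \<inter> f)) - (if x \<inter> f \<noteq> {} then 1 else 0) else 0)"
      proof -
        have "(\<Sum>f\<in>E. if b \<in> f then real (card (x \<inter> f)) else 0) - (\<Sum>f\<in>E. if b \<in> f then (if x \<inter> f \<noteq> {} then 1 else 0) else 0)
           = (\<Sum>f\<in>E. if b \<in> f then real (card (x \<inter> f)) - (if x \<inter> f \<noteq> {} then 1 else 0) else 0)"
          unfolding sum_subtractf[symmetric] by (rule sum.cong) auto
        then show ?thesis by linarith
      qed
      also have "(\<Sum>f\<in>E. if b \<in> f then real (card (x \<inter> f)) - (if x \<inter> f \<noteq> {} then 1 else 0) else 0)
          = (\<Sum>f\<in>E. if f = x then (if b \<in> f then 1 else 0) else 0)"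
        by (rule sum.cong) (auto simp: keyK[OF s xe] edge_card[OF s xe])
      also have "\<dots> = (if b \<in> x then 1 else 0)" by (simp add: sum.delta' fE xe)
      finally show ?thesis unfolding sumX[OF s] vp A B
        using ne[OF xe, of b] by (simp add: yv mat_id_def)
    next
      case ye
      have A: "(\<Sum>c\<in>V. if c \<in> x then ?M {c} y else 0) = real (card (x \<inter> y))"
      proof -
        have "(\<Sum>c\<in>V. if c \<in> x then ?M {c} y else 0) = (\<Sum>c\<in>V. if c \<in> x \<inter> y then 1 else 0)"
          by (rule sum.cong) (simp_all add: L_ve H_ve[OF s ye])
        also have "\<dots> = real (card (x \<inter> y))" using eV ind_sum[OF fV, of "x \<inter> y"] by blast
        finally show ?thesis .
      qed
      have B: "(\<Sum>f\<in>E. connection_matrix x f * ?M f y) = (\<Sum>f\<in>E. if f = y then - connection_matrix x f else 0)"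
        by (rule sum.cong) (auto simp: M_ee[OF s _ ye])
      have C: "\<dots> = - (if x \<inter> y \<noteq> {} then 1 else 0)"
        by (simp add: sum.delta' fE ye connection_matrix_def)
      show ?thesis unfolding sumX[OF s] vp A B C
        using keyK[OF s xe ye] by (simp add: mat_id_def)
    qed
  qed
qed


lemma Dm_sym: "Dm x y = Dm y x" by (simp add: Dm_def)

lemma H_sym: "signless_hodge X x y = signless_hodge X y x"
  unfolding hodge_Dm by (rule sum.cong) (auto simp: Dm_sym)

lemma L_sym: "connection_matrix x y = connection_matrix y x"
  by (auto simp: connection_matrix_def)

lemma H_int: "signless_hodge X x y \<in> \<int>"
  unfolding hodge_Dm Dm_def signless_d_def by (intro Ints_sum Ints_mult Ints_add) auto

theorem mainTheorem1:
  fixes V :: "'a set" and E :: "'a set set"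
  assumes "simple_graph V E"
  defines "X \<equiv> simplices V E"
  shows "\<exists>M. is_inverse_on X connection_matrix M
            \<and> (\<forall>x\<in>X. \<forall>y\<in>X. M x y \<in> \<int>)
            \<and> (\<forall>x\<in>X. \<forall>y\<in>X. signless_hodge X x y = connection_matrix x y - M x y)"
proof (intro exI conjI)
  let ?M = "\<lambda>x y. connection_matrix x y - signless_hodge X x y"
  show "\<forall>x\<in>X. \<forall>y\<in>X. signless_hodge X x y = connection_matrix x y - ?M x y" by simp
  show "\<forall>x\<in>X. \<forall>y\<in>X. ?M x y \<in> \<int>"
    using H_int by (auto simp: connection_matrix_def intro!: Ints_diff)
  have LM: "\<And>x y. x \<in> X \<Longrightarrow> y \<in> X \<Longrightarrow> mat_mult X connection_matrix ?M x y = mat_id x y"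
    unfolding mat_mult_def X_def using prod_id[OF assms(1)] by blast
  show "is_inverse_on X connection_matrix ?M"
    unfolding is_inverse_on_def
  proof (intro ballI conjI)
    fix x y assume x: "x \<in> X" and y: "y \<in> X"
    show "mat_mult X connection_matrix ?M x y = mat_id x y" using LM[OF x y] .
    have "mat_mult X ?M connection_matrix x y = mat_mult X connection_matrix ?M y x"
      unfolding mat_mult_def by (rule sum.cong) (auto simp: H_sym[of X] L_sym[of x] L_sym[of _ y])
    also have "\<dots> = mat_id x y" using LM[OF y x] by (auto simp: mat_id_def)
    finally show "mat_mult X ?M connection_matrix x y = mat_id x y" .
  qed
qed

end
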